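(* If $a$ is an integral algebraic element of a ring $K$, then the monogenic ring $\mathbb{Z}\langle a\rangle$ is finitely separable.
   Context: Rings are associative and not necessarily unital. $a\in K$ is integral algebraic if $f(a)=0$ for some monic $f\in\mathbb{Z}[x]$ with $f(0)=0$. $\mathbb{Z}\langle a\rangle=\{g(a): g\in\mathbb{Z}[x],\ g(0)=0\}$ is the subring generated by $a$. A ring $R$ is finitely separable if for every $r\in R$ and every subring $A\subseteq R$ with $r\notin A$ there exist a finite ring $F$ and a homomorphism $\varphi:R\to F$ with $\varphi(r)\notin\varphi(A)$. *)

theory Defs
  imports "HOL-Computational_Algebra.Polynomial"
begin

text \<open>Rings are associative, not necessarily unital: type class ring.\<close>

fun npow :: "'a::ring \<Rightarrow> nat \<Rightarrow> 'a" where
  "npow a 0 = 0"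
| "npow a (Suc 0) = a"
| "npow a (Suc (Suc n)) = npow a (Suc n) * a"

definition zsmul :: "int \<Rightarrow> 'a::ab_group_add \<Rightarrow> 'a" where
  "zsmul k x = (if 0 \<le> k then (\<Sum>_<nat k. x) else - (\<Sum>_<nat (-k). x))"

text \<open>evaluation g(a) of an integer polynomial without constant term (constant coefficient ignored)\<close>
definition peval :: "int poly \<Rightarrow> 'a::ring \<Rightarrow> 'a" where
  "peval g a = (\<Sum>i\<in>{1..degree g}. zsmul (coeff g i) (npow a i))"

definition integral_algebraic :: "'a::ring \<Rightarrow> bool" where
  "integral_algebraic a \<longleftrightarrow>
     (\<exists>f :: int poly. lead_coeff f = 1 \<and> poly f 0 = 0 \<and> peval f a = 0)"

definition Zgen :: "'a::ring \<Rightarrow> 'a set" where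
  "Zgen a = {peval g a | g :: int poly. poly g 0 = 0}"

definition subring_of :: "'a::ring set \<Rightarrow> bool" where
  "subring_of A \<longleftrightarrow> 0 \<in> A \<and> (\<forall>x\<in>A. - x \<in> A) \<and>
     (\<forall>x\<in>A. \<forall>y\<in>A. x + y \<in> A \<and> x * y \<in> A)"

definition nu_ring_on :: "'b set \<Rightarrow> ('b \<Rightarrow> 'b \<Rightarrow> 'b) \<Rightarrow> ('b \<Rightarrow> 'b \<Rightarrow> 'b) \<Rightarrow> 'b \<Rightarrow> ('b \<Rightarrow> 'b) \<Rightarrow> bool" where
  "nu_ring_on S add mul z neg \<longleftrightarrow>
     z \<in> S \<and> (\<forall>x\<in>S. neg x \<in> S) \<and> (\<forall>x\<in>S. \<forall>y\<in>S. add x y \<in> S \<and> mul x y \<in> S) \<and>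
     (\<forall>x\<in>S. \<forall>y\<in>S. \<forall>w\<in>S. add (add x y) w = add x (add y w)) \<and>
     (\<forall>x\<in>S. \<forall>y\<in>S. add x y = add y x) \<and>
     (\<forall>x\<in>S. add z x = x) \<and>
     (\<forall>x\<in>S. add (neg x) x = z) \<and>
     (\<forall>x\<in>S. \<forall>y\<in>S. \<forall>w\<in>S. mul (mul x y) w = mul x (mul y w)) \<and>
     (\<forall>x\<in>S. \<forall>y\<in>S. \<forall>w\<in>S. mul x (add y w) = add (mul x y) (mul x w)) \<and>
     (\<forall>x\<in>S. \<forall>y\<in>S. \<forall>w\<in>S. mul (add x y) w = add (mul x w) (mul y w))"

definition hom_on :: "'a::ring set \<Rightarrow> 'b set \<Rightarrow> ('b \<Rightarrow> 'b \<Rightarrow> 'b) \<Rightarrow> ('b \<Rightarrow> 'b \<Rightarrow> 'b) \<Rightarrow> ('a \<Rightarrow> 'b) \<Rightarrow> bool" where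
  "hom_on R S add mul \<phi> \<longleftrightarrow> \<phi> ` R \<subseteq> S \<and>
     (\<forall>x\<in>R. \<forall>y\<in>R. \<phi> (x + y) = add (\<phi> x) (\<phi> y) \<and> \<phi> (x * y) = mul (\<phi> x) (\<phi> y))"

text \<open>finite rings are represented (up to isomorphism) with carrier a finite set of naturals\<close>
definition fin_separable :: "'a::ring set \<Rightarrow> bool" where
  "fin_separable R \<longleftrightarrow>
     (\<forall>r\<in>R. \<forall>A. subring_of A \<and> A \<subseteq> R \<and> r \<notin> A \<longrightarrow>
        (\<exists>(S :: nat set) add mul z neg \<phi>. finite S \<and> nu_ring_on S add mul z neg \<and>
            hom_on R S add mul \<phi> \<and> \<phi> r \<notin> \<phi> ` A))"

end

theory Submission
  imports Defs
begin


lemma zsmul_0[simp]: "zsmul 0 x = 0" by (simp add: zsmul_def)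
lemma zsmul_1[simp]: "zsmul 1 x = x" by (simp add: zsmul_def)

lemma zsmul_succ: "zsmul (k+1) x = zsmul k x + x"
proof (cases "k \<ge> 0")
  case True
  then have "nat (k+1) = Suc (nat k)" by simp
  then show ?thesis using True by (simp add: zsmul_def)
next
  case False
  then have e: "nat (-k) = Suc (nat (-(k+1)))" by simp
  have "zsmul (k+1) x = - (\<Sum>_<nat (-(k+1)). x)"
    using False by (cases "k = -1") (auto simp: zsmul_def)
  then show ?thesis using False e by (simp add: zsmul_def)
qed

lemma zsmul_pred: "zsmul (k-1) x = zsmul k x - x"
  using zsmul_succ[of "k-1" x] by simp

lemma zsmul_add: "zsmul (a+b) x = zsmul a x + zsmul b x"
proof (induction b rule: int_induct[where k=0])
  case base then show ?case by simp
next
  case (step1 i) then show ?case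
    using zsmul_succ[of "a+i" x] zsmul_succ[of i x] by (simp add: add.assoc[symmetric])
next
  case (step2 i)
  have A: "zsmul (a+(i-1)) x = zsmul (a+i) x - x" using zsmul_pred[of "a+i" x] by (simp add: add_diff_eq)
  show ?case by (simp only: A step2.IH zsmul_pred[of i x]) (simp add: algebra_simps)
qed

lemma zsmul_uminus: "zsmul (-a) x = - zsmul a x"
  using zsmul_add[of "-a" a x] by (simp add: eq_neg_iff_add_eq_0)

lemma zsmul_diff: "zsmul (a-b) x = zsmul a x - zsmul b x"
  using zsmul_add[of a "-b" x] zsmul_uminus[of b x] by simp

lemma zsmul_mult: "zsmul (a*b) x = zsmul a (zsmul b x)"
proof (induction a rule: int_induct[where k=0])
  case base then show ?case by simp
next
  case (step1 i) then show ?case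
    by (simp add: distrib_right zsmul_add zsmul_succ)
next
  case (step2 i) then show ?case
    by (simp add: left_diff_distrib zsmul_diff zsmul_pred)
qed

lemma zsmul_vadd: "zsmul k (x+y) = zsmul k x + zsmul k y"
proof (induction k rule: int_induct[where k=0])
  case base then show ?case by simp
next
  case (step1 i) then show ?case by (simp only: zsmul_succ) (simp add: algebra_simps)
next
  case (step2 i) then show ?case by (simp only: zsmul_pred) (simp add: algebra_simps)
qed

lemma zsmul_vzero[simp]: "zsmul k 0 = 0"
  using zsmul_vadd[of k 0 0] by simp

lemma zsmul_vneg: "zsmul k (-x) = - zsmul k x"
  using zsmul_vadd[of k x "-x"] minus_unique[of "zsmul k x" "zsmul k (-x)"] by simp

lemma zsmul_vdiff: "zsmul k (x-y) = zsmul k x - zsmul k y"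
  using zsmul_vadd[of k x "-y"] zsmul_vneg[of k y] by simp

lemma zsmul_mleft: "zsmul k (x::'a::ring) * y = zsmul k (x*y)"
proof (induction k rule: int_induct[where k=0])
  case base then show ?case by simp
next
  case (step1 i) then show ?case by (simp only: zsmul_succ) (simp add: algebra_simps)
next
  case (step2 i) then show ?case by (simp only: zsmul_pred) (simp add: algebra_simps)
qed

lemma zsmul_mright: "(y::'a::ring) * zsmul k x = zsmul k (y*x)"
proof (induction k rule: int_induct[where k=0])
  case base then show ?case by simp
next
  case (step1 i) then show ?case by (simp only: zsmul_succ) (simp add: algebra_simps)
next
  case (step2 i) then show ?case by (simp only: zsmul_pred) (simp add: algebra_simps)
qed

lemma zsmul_sum: "zsmul k (sum f A) = (\<Sum>i\<in>A. zsmul k (f i))"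
  by (induction A rule: infinite_finite_induct) (simp_all add: zsmul_vadd)



definition subgrp :: "'b::ab_group_add set \<Rightarrow> bool" where
  "subgrp T \<longleftrightarrow> 0 \<in> T \<and> (\<forall>x\<in>T. -x \<in> T) \<and> (\<forall>x\<in>T. \<forall>y\<in>T. x+y \<in> T)"

lemma subgrpD: assumes "subgrp T"
  shows "0 \<in> T" "x \<in> T \<Longrightarrow> -x \<in> T" "x \<in> T \<Longrightarrow> y \<in> T \<Longrightarrow> x+y \<in> T"
    "x \<in> T \<Longrightarrow> y \<in> T \<Longrightarrow> x-y \<in> T"
  using assms unfolding subgrp_def by (blast, blast, blast, metis diff_conv_add_uminus)

lemma subgrp_zsmul: assumes "subgrp T" "x \<in> T" shows "zsmul k x \<in> T"
proof (induction k rule: int_induct[where k=0])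
  case base then show ?case using subgrpD[OF assms(1)] by simp
next
  case (step1 i) then show ?case using subgrpD[OF assms(1)] assms(2) by (simp add: zsmul_succ)
next
  case (step2 i) then show ?case using subgrpD[OF assms(1)] assms(2) by (simp add: zsmul_pred)
qed

lemma subgrp_sum: assumes "subgrp T" "\<forall>i\<in>A. f i \<in> T" shows "sum f A \<in> T"
  using assms(2)
  by (induction A rule: infinite_finite_induct) (simp_all add: subgrpD(1,3)[OF assms(1)])

fun spn :: "'b::ab_group_add list \<Rightarrow> 'b set" where
  "spn [] = {0}"
| "spn (g # gs) = {zsmul c g + s | c s. s \<in> spn gs}"

lemma spn_ConsE: assumes "x \<in> spn (g#gs)" obtains c s where "x = zsmul c g + s" "s \<in> spn gs"
  using assms by (simp only: spn.simps mem_Collect_eq) blast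

lemma spn_ConsI: "s \<in> spn gs \<Longrightarrow> zsmul c g + s \<in> spn (g#gs)"
  by (simp only: spn.simps mem_Collect_eq) blast

lemma spn_subgrp: "subgrp (spn gs)"
proof (induction gs)
  case Nil then show ?case by (simp add: subgrp_def)
next
  case (Cons g gs)
  note S = subgrpD[OF Cons.IH]
  have "0 \<in> spn (g#gs)" using spn_ConsI[OF S(1), of 0 g] by simp
  moreover have "-x \<in> spn (g#gs)" if "x \<in> spn (g#gs)" for x
  proof -
    obtain c s where "x = zsmul c g + s" "s \<in> spn gs" using \<open>x \<in> spn (g#gs)\<close> by (rule spn_ConsE)
    then have "-x = zsmul (-c) g + (-s)" by (simp add: zsmul_uminus)
    show ?thesis unfolding \<open>-x = _\<close> by (rule spn_ConsI[OF S(2)[OF \<open>s \<in> spn gs\<close>]])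
  qed
  moreover have "x+y \<in> spn (g#gs)" if "x \<in> spn (g#gs)" "y \<in> spn (g#gs)" for x y
  proof -
    obtain c s where "x = zsmul c g + s" "s \<in> spn gs" using \<open>x \<in> spn (g#gs)\<close> by (rule spn_ConsE)
    moreover obtain c' s' where "y = zsmul c' g + s'" "s' \<in> spn gs" using \<open>y \<in> spn (g#gs)\<close> by (rule spn_ConsE)
    ultimately have "x+y = zsmul (c+c') g + (s+s')" by (simp add: zsmul_add algebra_simps)
    show ?thesis unfolding \<open>x+y = _\<close> by (rule spn_ConsI[OF S(3)[OF \<open>s \<in> spn gs\<close> \<open>s' \<in> spn gs\<close>]])
  qed
  ultimately show ?case unfolding subgrp_def by blast
qed

lemma spn_hom:
  assumes add: "\<And>x y. h (x+y) = h x + h y" and sm: "\<And>k x. h (zsmul k x) = zsmul k (h x)"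
    and T: "subgrp T" and gen: "\<forall>g\<in>set gs. h g \<in> T"
  shows "x \<in> spn gs \<Longrightarrow> h x \<in> T"
  using gen
proof (induction gs arbitrary: x)
  case Nil
  have "h 0 = 0" using sm[of 0 0] by simp
  then show ?case using Nil subgrpD[OF T] by simp
next
  case (Cons g gs)
  obtain c s where "x = zsmul c g + s" "s \<in> spn gs" using \<open>x \<in> spn (g#gs)\<close> by (rule spn_ConsE)
  then show ?case using Cons add sm subgrpD(3)[OF T] subgrp_zsmul[OF T] by simp
qed

lemma int_subgroup:
  fixes D :: "int set"
  assumes "0 \<in> D" "\<And>x y. x \<in> D \<Longrightarrow> y \<in> D \<Longrightarrow> x - y \<in> D"
  shows "\<exists>d\<ge>0. D = {c. d dvd c}"
proof (cases "D = {0}")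
  case True then show ?thesis by (intro exI[of _ 0]) auto
next
  case False
  then obtain x where x: "x \<in> D" "x \<noteq> 0" using assms(1) by auto
  have neg: "-y \<in> D" if "y \<in> D" for y using assms(2)[OF assms(1) that] by simp
  have add: "y + z \<in> D" if "y \<in> D" "z \<in> D" for y z using assms(2)[OF that(1) neg[OF that(2)]] by simp
  have "\<bar>x\<bar> \<in> D" using x neg by (cases "x \<ge> 0") auto
  define d where "d = (LEAST n::nat. n > 0 \<and> int n \<in> D)"
  have ex: "\<exists>n::nat. n > 0 \<and> int n \<in> D"
    using \<open>\<bar>x\<bar> \<in> D\<close> x by (intro exI[of _ "nat \<bar>x\<bar>"]) auto
  have d: "d > 0" "int d \<in> D" using LeastI_ex[OF ex] unfolding d_def by auto
  have dmin: "n \<ge> d" if "n > 0" "int n \<in> D" for n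
    unfolding d_def using that by (simp add: Least_le)
  have mult: "k * int d \<in> D" for k
  proof (induction k rule: int_induct[where k=0])
    case base then show ?case using assms(1) by simp
  next
    case (step1 i) then show ?case using add[OF _ d(2)] by (simp add: distrib_right)
  next
    case (step2 i) then show ?case using assms(2)[OF _ d(2)] by (simp add: left_diff_distrib)
  qed
  have "D = {c. int d dvd c}"
  proof safe
    fix c assume c: "c \<in> D"
    have "c mod int d = c - (c div int d) * int d" by (simp add: minus_div_mult_eq_mod)
    then have m: "c mod int d \<in> D" using assms(2)[OF c mult] by simp
    have "c mod int d = 0"
    proof (rule ccontr)
      assume "c mod int d \<noteq> 0"
      moreover have "0 \<le> c mod int d" "c mod int d < int d" using d(1) by simp_all
      ultimately have "nat (c mod int d) \<ge> d" using dmin[of "nat (c mod int d)"] m by simp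
      then show False using \<open>c mod int d < int d\<close> \<open>0 \<le> c mod int d\<close> by linarith
    qed
    then show "int d dvd c" by (simp add: dvd_eq_mod_eq_0)
  next
    fix c assume "int d dvd c"
    then obtain k where "c = int d * k" by (auto elim: dvdE)
    then show "c \<in> D" using mult[of k] by (simp add: mult.commute)
  qed
  then show ?thesis by (intro exI[of _ "int d"]) simp
qed



lemma sep:
  assumes L: "subgrp L"
  shows "v \<in> spn gs \<Longrightarrow> v \<notin> L \<Longrightarrow> \<exists>m>0. \<forall>l\<in>L. \<forall>s\<in>spn gs. v \<noteq> l + zsmul m s"
proof (induction gs arbitrary: v)
  case Nil then show ?case using subgrpD(1)[OF L] by simp
next
  case (Cons g gs)
  note SL = subgrpD[OF L]
  note SS = subgrpD[OF spn_subgrp[of gs]]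
  note SS' = subgrpD[OF spn_subgrp[of "g#gs"]]
  obtain t0 s0 where v: "v = zsmul t0 g + s0" "s0 \<in> spn gs" using Cons.prems by (blast elim: spn_ConsE)
  define M where "M = {l + s | l s. l \<in> L \<and> s \<in> spn gs}"
  have Mi: "l + s \<in> M" if "l \<in> L" "s \<in> spn gs" for l s using that unfolding M_def by blast
  have Mdiff: "x - y \<in> M" if "x \<in> M" "y \<in> M" for x y
  proof -
    obtain l s l' s' where "x = l + s" "y = l' + s'" "l \<in> L" "s \<in> spn gs" "l' \<in> L" "s' \<in> spn gs"
      using \<open>x \<in> M\<close> \<open>y \<in> M\<close> unfolding M_def by blast
    then have "x - y = (l - l') + (s - s')" "l - l' \<in> L" "s - s' \<in> spn gs"
      using SL SS by (auto simp: algebra_simps)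
    then show ?thesis using Mi by simp
  qed
  define D where "D = {c. zsmul c g \<in> M}"
  have "0 \<in> D" unfolding D_def using Mi[OF SL(1) SS(1)] by simp
  moreover have "x - y \<in> D" if "x \<in> D" "y \<in> D" for x y
    using that Mdiff unfolding D_def by (simp add: zsmul_diff)
  ultimately obtain d where d: "d \<ge> 0" "D = {c. d dvd c}" using int_subgroup by metis
  have inD: "d dvd c" if "zsmul c g \<in> M" for c using that d unfolding D_def by auto
  have cons_in: "zsmul c g + s \<in> spn (g#gs)" if "s \<in> spn gs" for c s using that by (rule spn_ConsI)
  show ?case
  proof (cases "d dvd t0")
    case False
    define m where "m = (if d = 0 then \<bar>t0\<bar> + 1 else d)"
    have m0: "m > 0" using d False unfolding m_def by auto
    have "v \<noteq> l + zsmul m s" if "l \<in> L" "s \<in> spn (g#gs)" for l s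
    proof
      assume eq: "v = l + zsmul m s"
      obtain c s' where s: "s = zsmul c g + s'" "s' \<in> spn gs" using \<open>s \<in> spn (g#gs)\<close> by (rule spn_ConsE)
      have e0: "zsmul t0 g + s0 = l + (zsmul m (zsmul c g) + zsmul m s')"
        using eq v s by (simp add: zsmul_vadd)
      have "zsmul (t0 - m*c) g = zsmul t0 g - zsmul m (zsmul c g)" by (simp only: zsmul_diff zsmul_mult)
      also have "\<dots> = l + (zsmul m s' - s0)" using e0 by (simp add: algebra_simps)
      also have "\<dots> \<in> M" using Mi that(1) SS(4)[OF subgrp_zsmul[OF spn_subgrp s(2)] v(2)] by simp
      finally have "d dvd t0 - m*c" by (rule inD)
      show False
      proof (cases "d = 0")
        case True
        then have "t0 = m * c" using \<open>d dvd t0 - m*c\<close> by simp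
        moreover have "t0 \<noteq> 0" using False True by auto
        ultimately have "c \<noteq> 0" by auto
        then have "\<bar>m*c\<bar> \<ge> m" using m0 by (simp add: abs_mult)
        then show False using \<open>t0 = m*c\<close> True unfolding m_def by simp
      next
        case False
        then have "m = d" unfolding m_def by simp
        then show False using \<open>d dvd t0 - m*c\<close> \<open>\<not> d dvd t0\<close>
          by (metis dvd_add dvd_triv_left diff_add_cancel)
      qed
    qed
    then show ?thesis using m0 by blast
  next
    case True
    then obtain t where t: "t0 = d * t" by (auto elim: dvdE)
    have "d \<in> D" using d by simp
    then obtain lw sw where w: "zsmul d g = lw + sw" "lw \<in> L" "sw \<in> spn gs"
      unfolding D_def M_def by blast
    define u where "u = zsmul t sw + s0"
    have u: "u \<in> spn gs" unfolding u_def using SS(3) subgrp_zsmul[OF spn_subgrp w(3)] v(2) by simp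
    have vu: "v = zsmul t lw + u"
    proof -
      have "zsmul t0 g = zsmul t lw + zsmul t sw"
        unfolding t by (simp only: mult.commute[of d t] zsmul_mult w(1) zsmul_vadd)
      then show ?thesis unfolding u_def v(1) by (simp add: add.assoc)
    qed
    have "u \<notin> L"
    proof
      assume "u \<in> L"
      then have "v \<in> L" using vu SL(3) subgrp_zsmul[OF L w(2)] by simp
      then show False using Cons.prems by simp
    qed
    from Cons.IH[OF u this] obtain m0 where m0: "m0 > 0" "\<forall>l\<in>L. \<forall>s\<in>spn gs. u \<noteq> l + zsmul m0 s"
      by blast
    define m where "m = (if d = 0 then m0 else m0 * d)"
    have mpos: "m > 0" using m0 d unfolding m_def by auto
    have "v \<noteq> l + zsmul m s" if "l \<in> L" "s \<in> spn (g#gs)" for l s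
    proof
      assume eq: "v = l + zsmul m s"
      obtain c s' where s: "s = zsmul c g + s'" "s' \<in> spn gs" using \<open>s \<in> spn (g#gs)\<close> by (rule spn_ConsE)
      define l1 where "l1 = l - zsmul t lw"
      have l1: "l1 \<in> L" unfolding l1_def using SL(4) that(1) subgrp_zsmul[OF L w(2)] by simp
      have "zsmul m s = zsmul (m*c) g + zsmul m s'" using s by (simp only: zsmul_vadd zsmul_mult)
      then have "v = l + (zsmul (m*c) g + zsmul m s')" using eq by simp
      then have ueq: "u = l1 + zsmul (m*c) g + zsmul m s'"
        using vu unfolding l1_def by (simp add: algebra_simps)
      have "zsmul (m*c) g = - l1 + (u - zsmul m s')" using ueq by (simp add: algebra_simps)
      also have "\<dots> \<in> M" by (rule Mi[OF SL(2)[OF l1] SS(4)[OF u subgrp_zsmul[OF spn_subgrp s(2)]]])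
      finally have dd: "d dvd m*c" by (rule inD)
      show False
      proof (cases "d = 0")
        case True
        then have "c = 0" using dd mpos by simp
        then have "u = l1 + zsmul m0 s'" using ueq True unfolding m_def by simp
        then show False using m0(2) l1 s(2) by blast
      next
        case False
        then have mm: "m = m0 * d" unfolding m_def by simp
        have "zsmul (m*c) g = zsmul (m0*c) (zsmul d g)" proof -
          have "m*c = (m0*c)*d" using mm by simp
          then show ?thesis by (simp only: zsmul_mult)
        qed
        also have "\<dots> = zsmul (m0*c) lw + zsmul (m0*c) sw" using w by (simp add: zsmul_vadd)
        finally have e1: "zsmul (m*c) g = zsmul (m0*c) lw + zsmul (m0*c) sw" .
        have e2: "zsmul m s' = zsmul m0 (zsmul d s')" proof -
          have "m = m0*d" using mm by simp
          then show ?thesis by (simp only: zsmul_mult)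
        qed
        have e3: "zsmul (m0*c) sw = zsmul m0 (zsmul c sw)" by (simp add: zsmul_mult)
        have "u = (l1 + zsmul (m0*c) lw) + zsmul m0 (zsmul c sw + zsmul d s')"
        proof -
          have "zsmul m0 (zsmul c sw + zsmul d s') = zsmul (m0*c) sw + zsmul m s'"
            using e2 e3 by (simp add: zsmul_vadd)
          then show ?thesis using ueq e1 by (simp add: algebra_simps)
        qed
        moreover have "l1 + zsmul (m0*c) lw \<in> L" using SL(3)[OF l1 subgrp_zsmul[OF L w(2)]] .
        moreover have "zsmul c sw + zsmul d s' \<in> spn gs"
          using SS(3) subgrp_zsmul[OF spn_subgrp w(3)] subgrp_zsmul[OF spn_subgrp s(2)] by simp
        ultimately show False using m0(2) by blast
      qed
    qed
    then show ?thesis using mpos by blast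
  qed
qed

lemma spn_finite_reps:
  assumes "m > 0"
  shows "\<exists>F. finite F \<and> F \<subseteq> spn gs \<and> (\<forall>x\<in>spn gs. \<exists>y\<in>F. \<exists>s\<in>spn gs. x = y + zsmul m s)"
proof (induction gs)
  case Nil then show ?case by (intro exI[of _ "{0}"]) simp
next
  case (Cons g gs)
  then obtain F where F: "finite F" "F \<subseteq> spn gs" "\<forall>x\<in>spn gs. \<exists>y\<in>F. \<exists>s\<in>spn gs. x = y + zsmul m s"
    by blast
  define F' where "F' = (\<lambda>(c,y). zsmul c g + y) ` ({0..<m} \<times> F)"
  have "finite F'" unfolding F'_def using F(1) by simp
  moreover have "F' \<subseteq> spn (g#gs)" unfolding F'_def using F(2) by (auto intro: spn_ConsI)
  moreover have "\<exists>y\<in>F'. \<exists>s\<in>spn (g#gs). x = y + zsmul m s" if "x \<in> spn (g#gs)" for x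
  proof -
    obtain c s0 where x: "x = zsmul c g + s0" "s0 \<in> spn gs" using \<open>x \<in> spn (g#gs)\<close> by (rule spn_ConsE)
    obtain y s1 where y: "y \<in> F" "s1 \<in> spn gs" "s0 = y + zsmul m s1" using F(3) x(2) by blast
    have "zsmul c g = zsmul (c mod m) g + zsmul m (zsmul (c div m) g)"
      by (simp only: zsmul_mult[symmetric] zsmul_add[symmetric] mod_mult_div_eq)
    then have "x = (zsmul (c mod m) g + y) + zsmul m (zsmul (c div m) g + s1)"
      using x y by (simp only: zsmul_vadd) (simp add: algebra_simps)
    moreover have "zsmul (c mod m) g + y \<in> F'" unfolding F'_def using y(1) assms
      by (intro image_eqI[of _ _ "(c mod m, y)"]) auto
    moreover have "zsmul (c div m) g + s1 \<in> spn (g#gs)" using y(2) by (rule spn_ConsI)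
    ultimately show ?thesis by blast
  qed
  ultimately show ?case by blast
qed



lemma fs_general:
  fixes gs :: "'a::ring list"
  assumes mc: "\<And>x y. x \<in> spn gs \<Longrightarrow> y \<in> spn gs \<Longrightarrow> x*y \<in> spn gs"
  shows "fin_separable (spn gs)"
  unfolding fin_separable_def
proof (intro ballI allI impI)
  fix r A
  assume r: "r \<in> spn gs" and A: "subring_of A \<and> A \<subseteq> spn gs \<and> r \<notin> A"
  define R where "R = spn gs"
  note SR = subgrpD[OF spn_subgrp[of gs], folded R_def]
  have mR: "x*y \<in> R" if "x \<in> R" "y \<in> R" for x y using mc that unfolding R_def by simp
  have "subgrp A" using A unfolding subring_of_def subgrp_def by blast
  from sep[OF this r] A obtain m where m: "m > 0" "\<forall>l\<in>A. \<forall>s\<in>R. r \<noteq> l + zsmul m s"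
    unfolding R_def by blast
  define I where "I = zsmul m ` R"
  have IR: "I \<subseteq> R" unfolding I_def using subgrp_zsmul[OF spn_subgrp] R_def by auto
  have I0: "0 \<in> I" unfolding I_def using SR(1) by (auto intro: image_eqI[of _ _ 0])
  have Iadd: "x + y \<in> I" if "x \<in> I" "y \<in> I" for x y
    using that SR(3) unfolding I_def by (auto simp flip: zsmul_vadd)
  have Ineg: "-x \<in> I" if "x \<in> I" for x
    using that SR(2) unfolding I_def by (auto simp flip: zsmul_vneg)
  have Idiff: "x - y \<in> I" if "x \<in> I" "y \<in> I" for x y
    using Iadd[OF that(1) Ineg[OF that(2)]] by simp
  have Iml: "x * y \<in> I" if "x \<in> I" "y \<in> R" for x y
  proof -
    obtain s where "s \<in> R" "x = zsmul m s" using \<open>x \<in> I\<close> unfolding I_def by auto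
    then show ?thesis using mR[OF \<open>s \<in> R\<close> that(2)] unfolding I_def by (simp add: zsmul_mleft)
  qed
  have Imr: "y * x \<in> I" if "x \<in> I" "y \<in> R" for x y
  proof -
    obtain s where "s \<in> R" "x = zsmul m s" using \<open>x \<in> I\<close> unfolding I_def by auto
    then show ?thesis using mR[OF that(2) \<open>s \<in> R\<close>] unfolding I_def by (simp add: zsmul_mright)
  qed
  define cls where "cls x = {y \<in> R. x - y \<in> I}" for x
  have cls_eq: "cls x = cls y \<longleftrightarrow> x - y \<in> I" if "x \<in> R" "y \<in> R" for x y
  proof
    assume "cls x = cls y"
    moreover have "x \<in> cls x" unfolding cls_def using that I0 by simp
    ultimately have "y - x \<in> I" unfolding cls_def by simp
    then show "x - y \<in> I" using Ineg by fastforce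
  next
    assume xy: "x - y \<in> I"
    show "cls x = cls y"
    proof (unfold cls_def, safe)
      fix z assume "z \<in> R" "x - z \<in> I"
      then show "y - z \<in> I" using Idiff[OF \<open>x - z \<in> I\<close> xy] by (simp add: algebra_simps)
    next
      fix z assume "z \<in> R" "y - z \<in> I"
      then show "x - z \<in> I" using Iadd[OF xy \<open>y - z \<in> I\<close>] by (simp add: algebra_simps)
    qed
  qed
  obtain F where F: "finite F" "F \<subseteq> R" "\<forall>x\<in>R. \<exists>y\<in>F. \<exists>s\<in>R. x = y + zsmul m s"
    using spn_finite_reps[OF m(1), of gs] unfolding R_def by blast
  have "cls ` R \<subseteq> cls ` F"
  proof
    fix C assume "C \<in> cls ` R"
    then obtain x where x: "x \<in> R" "C = cls x" by auto
    then obtain y s where "y \<in> F" "s \<in> R" "x = y + zsmul m s" using F(3) by blast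
    moreover have "x - y \<in> I" using calculation unfolding I_def by simp
    ultimately have "cls x = cls y" using cls_eq x F(2) by blast
    then show "C \<in> cls ` F" using x \<open>y \<in> F\<close> by simp
  qed
  then have finQ: "finite (cls ` R)" using F(1) finite_subset by blast
  obtain e :: "'a set \<Rightarrow> nat" and n0 where e: "e ` (cls ` R) = {i. i < n0}" "inj_on e (cls ` R)"
    using finite_imp_inj_to_nat_seg[OF finQ] by blast
  define \<phi> where "\<phi> x = e (cls x)" for x
  have phi_eq: "\<phi> x = \<phi> y \<longleftrightarrow> x - y \<in> I" if "x \<in> R" "y \<in> R" for x y
    unfolding \<phi>_def using cls_eq[OF that] e(2) that by (auto dest: inj_onD)
  define S where "S = \<phi> ` R"
  define \<rho> where "\<rho> u = (SOME x. x \<in> R \<and> \<phi> x = u)" for u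
  have rho: "\<rho> (\<phi> x) \<in> R" "\<rho> (\<phi> x) - x \<in> I" if "x \<in> R" for x
  proof -
    have "\<rho> (\<phi> x) \<in> R \<and> \<phi> (\<rho> (\<phi> x)) = \<phi> x"
      unfolding \<rho>_def by (rule someI[of _ x]) (use that in simp)
    then show "\<rho> (\<phi> x) \<in> R" "\<rho> (\<phi> x) - x \<in> I" using phi_eq that by auto
  qed
  define add where "add u v = \<phi> (\<rho> u + \<rho> v)" for u v
  define mul where "mul u v = \<phi> (\<rho> u * \<rho> v)" for u v
  define neg where "neg u = \<phi> (- \<rho> u)" for u
  define z where "z = \<phi> 0"
  have add_phi: "add (\<phi> x) (\<phi> y) = \<phi> (x + y)" if "x \<in> R" "y \<in> R" for x y
  proof -
    have e: "(\<rho> (\<phi> x) + \<rho> (\<phi> y)) - (x + y) = (\<rho> (\<phi> x) - x) + (\<rho> (\<phi> y) - y)" by (simp add: algebra_simps)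
    have "(\<rho> (\<phi> x) + \<rho> (\<phi> y)) - (x + y) \<in> I" unfolding e by (rule Iadd[OF rho(2)[OF that(1)] rho(2)[OF that(2)]])
    then show ?thesis unfolding add_def using phi_eq rho that SR(3) by simp
  qed
  have neg_phi: "neg (\<phi> x) = \<phi> (- x)" if "x \<in> R" for x
  proof -
    have e: "(- \<rho> (\<phi> x)) - (- x) = - (\<rho> (\<phi> x) - x)" by (simp add: algebra_simps)
    have "(- \<rho> (\<phi> x)) - (- x) \<in> I" unfolding e by (rule Ineg[OF rho(2)[OF that]])
    then show ?thesis unfolding neg_def using phi_eq rho that SR(2) by simp
  qed
  have mul_phi: "mul (\<phi> x) (\<phi> y) = \<phi> (x * y)" if "x \<in> R" "y \<in> R" for x y
  proof -
    let ?x = "\<rho> (\<phi> x)" and ?y = "\<rho> (\<phi> y)"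
    have e: "?x * ?y - x * y = (?x - x) * ?y + x * (?y - y)" by (simp add: algebra_simps)
    have "(?x - x) * ?y \<in> I" by (rule Iml[OF rho(2)[OF that(1)] rho(1)[OF that(2)]])
    moreover have "x * (?y - y) \<in> I" by (rule Imr[OF rho(2)[OF that(2)] that(1)])
    ultimately have "?x * ?y - x * y \<in> I" unfolding e by (rule Iadd)
    then show ?thesis unfolding mul_def using phi_eq rho that mR by simp
  qed
  have finS: "finite S" unfolding S_def \<phi>_def using finQ by (simp add: image_image[symmetric])
  have ring: "nu_ring_on S add mul z neg"
    unfolding nu_ring_on_def S_def z_def
    using SR mR
    by (auto simp: add_phi neg_phi mul_phi algebra_simps)
  have hom: "hom_on R S add mul \<phi>"
    unfolding hom_on_def S_def using add_phi mul_phi by auto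
  have sepr: "\<phi> r \<notin> \<phi> ` A"
  proof
    assume "\<phi> r \<in> \<phi> ` A"
    then obtain a' where a': "a' \<in> A" "\<phi> r = \<phi> a'" by auto
    then have "r - a' \<in> I" using phi_eq r A unfolding R_def by auto
    then obtain s where "s \<in> R" "r - a' = zsmul m s" unfolding I_def by auto
    then have "r = a' + zsmul m s" by (simp add: algebra_simps)
    then show False using m(2) a'(1) \<open>s \<in> R\<close> by blast
  qed
  show "\<exists>(S :: nat set) add mul z neg \<phi>. finite S \<and> nu_ring_on S add mul z neg \<and>
            hom_on (spn gs) S add mul \<phi> \<and> \<phi> r \<notin> \<phi> ` A"
    using finS ring hom sepr unfolding R_def by blast
qed



lemma npow_Suc: "i \<ge> 1 \<Longrightarrow> npow a (Suc i) = npow a i * a"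
  by (cases i) auto

lemma gen_in_spn: "g \<in> set gs \<Longrightarrow> g \<in> spn gs"
proof (induction gs)
  case Nil then show ?case by simp
next
  case (Cons x xs)
  show ?case
  proof (cases "g = x")
    case True
    have "x = zsmul 1 x + 0" by simp
    then show ?thesis using True spn_ConsI[OF subgrpD(1)[OF spn_subgrp[of xs]], of 1 x] by simp
  next
    case False
    then have "g \<in> spn xs" using Cons by simp
    then show ?thesis using spn_ConsI[of g xs 0 x] by simp
  qed
qed

lemma peval_ext:
  assumes "degree g \<le> N"
  shows "peval g a = (\<Sum>i\<in>{1..N}. zsmul (coeff g i) (npow a i))"
  unfolding peval_def
proof (rule sum.mono_neutral_left)
  show "\<forall>i\<in>{1..N} - {1..degree g}. zsmul (coeff g i) (npow a i) = 0"
    by (auto simp: coeff_eq_0)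
qed (use assms in auto)

lemma peval_add: "peval (g + h) a = peval g a + peval h a"
proof -
  define N where "N = max (degree g) (degree h)"
  have "degree (g+h) \<le> N" unfolding N_def by (rule degree_add_le_max)
  then show ?thesis
    using peval_ext[of g N a] peval_ext[of h N a] peval_ext[of "g+h" N a]
    unfolding N_def by (simp add: zsmul_add sum.distrib)
qed

lemma peval_minus: "peval (- g) a = - peval g a"
  unfolding peval_def by (simp add: zsmul_uminus sum_negf)

lemma peval_monom: "peval (monom 1 i) a = npow a i"
proof -
  have "peval (monom 1 i) a = (\<Sum>j\<in>{1..i}. zsmul (coeff (monom 1 i) j) (npow a j))"
    by (rule peval_ext) (simp add: degree_monom_le)
  also have "\<dots> = (\<Sum>j\<in>{1..i}. if j = i then npow a j else 0)"
    by (rule sum.cong) (auto simp: coeff_monom)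
  also have "\<dots> = npow a i" by (cases i) (simp_all add: sum.delta)
  finally show ?thesis .
qed

lemma Zgen_subgrp: "subgrp (Zgen a)"
  unfolding subgrp_def Zgen_def
proof (intro conjI ballI)
  have "peval 0 a = 0" by (simp add: peval_def)
  then show "0 \<in> {peval g a |g. poly g 0 = 0}" by (intro CollectI exI[of _ 0]) simp
next
  fix x assume "x \<in> {peval g a |g. poly g 0 = 0}"
  then obtain g where "x = peval g a" "poly g 0 = 0" by blast
  then show "- x \<in> {peval g a |g. poly g 0 = 0}"
    by (intro CollectI exI[of _ "-g"]) (simp add: peval_minus)
next
  fix x y assume "x \<in> {peval g a |g. poly g 0 = 0}" "y \<in> {peval g a |g. poly g 0 = 0}"
  then obtain g h where "x = peval g a" "poly g 0 = 0" "y = peval h a" "poly h 0 = 0" by blast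
  then show "x + y \<in> {peval g a |g. poly g 0 = 0}"
    by (intro CollectI exI[of _ "g+h"]) (simp add: peval_add)
qed

lemma npow_Zgen: "i \<ge> 1 \<Longrightarrow> npow a i \<in> Zgen a"
  unfolding Zgen_def
  by (intro CollectI exI[of _ "monom 1 i"]) (simp add: peval_monom poly_monom)

lemma Zgen_spn:
  fixes a :: "'a::ring"
  assumes "integral_algebraic a"
  shows "\<exists>gs. Zgen a = spn gs \<and> (\<forall>x\<in>spn gs. \<forall>y\<in>spn gs. x*y \<in> spn gs)"
proof -
  obtain f :: "int poly" where f: "lead_coeff f = 1" "poly f 0 = 0" "peval f a = 0"
    using assms unfolding integral_algebraic_def by blast
  define n where "n = degree f"
  have n1: "n \<ge> 1"
  proof (rule ccontr)
    assume "\<not> n \<ge> 1"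
    then have "n = 0" by simp
    then have "coeff f 0 = 1" using f(1) unfolding n_def by simp
    then show False using f(2) by (simp add: poly_0_coeff_0)
  qed
  define gs where "gs = map (npow a) [1..<Suc n]"
  define T where "T = spn gs"
  have setgs: "set gs = npow a ` {1..n}" unfolding gs_def by auto
  note ST = spn_subgrp[of gs, folded T_def]
  have G: "npow a i \<in> T" if "1 \<le> i" "i \<le> n" for i
    unfolding T_def using that by (intro gen_in_spn) (simp add: setgs)
  have "peval f a = (\<Sum>i\<in>insert n {1..<n}. zsmul (coeff f i) (npow a i))"
    unfolding peval_def n_def[symmetric]
    using n1 by (intro sum.cong) auto
  also have "\<dots> = npow a n + (\<Sum>i\<in>{1..<n}. zsmul (coeff f i) (npow a i))"
    using f(1) unfolding n_def by simp
  finally have nrel: "npow a n = - (\<Sum>i\<in>{1..<n}. zsmul (coeff f i) (npow a i))"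
    using f(3) by (simp add: eq_neg_iff_add_eq_0)
  have "npow a n * a = - (\<Sum>i\<in>{1..<n}. zsmul (coeff f i) (npow a i * a))"
    unfolding nrel by (simp add: sum_distrib_right zsmul_mleft)
  also have "\<dots> = - (\<Sum>i\<in>{1..<n}. zsmul (coeff f i) (npow a (Suc i)))"
    by (simp add: npow_Suc)
  also have "\<dots> \<in> T"
    using ST by (intro subgrpD(2)[OF ST] subgrp_sum[OF ST] ballI subgrp_zsmul[OF ST] G) auto
  finally have Gn: "npow a n * a \<in> T" .
  have RA: "x * a \<in> T" if "x \<in> T" for x
  proof (rule spn_hom[where h="\<lambda>x. x * a"])
    show "x \<in> spn gs" using that T_def by simp
    show "\<forall>g\<in>set gs. g * a \<in> T"
    proof
      fix g assume "g \<in> set gs"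
      then obtain i where i: "g = npow a i" "1 \<le> i" "i \<le> n" using setgs by auto
      show "g * a \<in> T"
      proof (cases "i = n")
        case True then show ?thesis using i Gn by simp
      next
        case False then show ?thesis using i G[of "Suc i"] npow_Suc[of i a] by simp
      qed
    qed
  qed (auto simp: distrib_right zsmul_mleft ST)
  have npT: "npow a i \<in> T" if "i \<ge> 1" for i
    using that
  proof (induction i)
    case 0 then show ?case by simp
  next
    case (Suc i)
    show ?case
    proof (cases "i = 0")
      case True then show ?thesis using G[of 1] n1 by simp
    next
      case False then show ?thesis using Suc RA npow_Suc[of i a] by simp
    qed
  qed
  have RP: "x * npow a j \<in> T" if "x \<in> T" "j \<ge> 1" for x j
    using that(2)
  proof (induction j)
    case 0 then show ?case by simp
  next
    case (Suc j)
    show ?case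
    proof (cases "j = 0")
      case True then show ?thesis using RA that(1) by simp
    next
      case False
      then have "x * npow a (Suc j) = (x * npow a j) * a" using npow_Suc[of j a] by (simp add: mult.assoc)
      then show ?thesis using Suc False RA by simp
    qed
  qed
  have MC: "x * y \<in> T" if "x \<in> T" "y \<in> T" for x y
  proof (rule spn_hom[where h="\<lambda>y. x * y"])
    show "y \<in> spn gs" using that T_def by simp
    show "\<forall>g\<in>set gs. x * g \<in> T" using setgs RP that(1) by auto
  qed (auto simp: distrib_left zsmul_mright ST)
  have "Zgen a \<subseteq> T"
  proof
    fix x assume "x \<in> Zgen a"
    then obtain g where "x = peval g a" unfolding Zgen_def by blast
    then show "x \<in> T" unfolding peval_def
      by (auto intro!: subgrp_sum[OF ST] subgrp_zsmul[OF ST] npT)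
  qed
  moreover have "T \<subseteq> Zgen a"
  proof
    fix x assume "x \<in> T"
    show "x \<in> Zgen a"
    proof (rule spn_hom[where h=id and gs=gs, simplified])
      show "x \<in> spn gs" using \<open>x \<in> T\<close> T_def by simp
      show "subgrp (Zgen a)" by (rule Zgen_subgrp)
      show "\<forall>g\<in>set gs. g \<in> Zgen a" by (auto simp: setgs npow_Zgen)
    qed
  qed
  ultimately show ?thesis using MC unfolding T_def by blast
qed

theorem lemma6:
  fixes a :: "'a::ring"
  assumes "integral_algebraic a"
  shows "fin_separable (Zgen a)"
  using Zgen_spn[OF assms] fs_general by metis


end
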